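(* Let $n\ge 3$ and let $h(q)=q^n+q^{n-2}a_{n-2}+\dots+qa_1+a_0$ with $a_0,\dots,a_{n-2}\in\mathbb{H}$ and $a_{n-2}\neq 0$. Put $\lambda=\big(\max_{0\le j\le n-2}|a_j|\big)^{1/n}$. Then every zero $q\in\mathbb{H}$ of $h$ satisfies $$|q|\le \lambda+\max\{\lambda^2,\lambda^{n-1}\}.$$
   Context: $\mathbb{H}$ denotes the real quaternions with the Euclidean norm $|q|=\sqrt{q\bar q}$. The polynomial $h$ has coefficients written to the right of the powers and is evaluated at $q\in\mathbb{H}$ by direct substitution; a zero of $h$ is a $q\in\mathbb{H}$ with $h(q)=0$. *)

theory Defs
  imports "HOL-Analysis.Analysis"
begin

datatype quat = Quat (Re: real) (Im1: real) (Im2: real) (Im3: real)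

lemma quat_eqI: "Re x = Re y \<Longrightarrow> Im1 x = Im1 y \<Longrightarrow> Im2 x = Im2 y \<Longrightarrow> Im3 x = Im3 y \<Longrightarrow> x = y"
  by (cases x; cases y) simp

instantiation quat :: ring_1
begin
definition "0 = Quat 0 0 0 0"
definition "1 = Quat 1 0 0 0"
definition "x + y = Quat (Re x + Re y) (Im1 x + Im1 y) (Im2 x + Im2 y) (Im3 x + Im3 y)"
definition "x - y = Quat (Re x - Re y) (Im1 x - Im1 y) (Im2 x - Im2 y) (Im3 x - Im3 y)"
definition "- x = Quat (- Re x) (- Im1 x) (- Im2 x) (- Im3 x)"
definition "x * y = Quat
   (Re x * Re y - Im1 x * Im1 y - Im2 x * Im2 y - Im3 x * Im3 y)
   (Re x * Im1 y + Im1 x * Re y + Im2 x * Im3 y - Im3 x * Im2 y)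
   (Re x * Im2 y - Im1 x * Im3 y + Im2 x * Re y + Im3 x * Im1 y)
   (Re x * Im3 y + Im1 x * Im2 y - Im2 x * Im1 y + Im3 x * Re y)"
instance
  by standard (auto intro!: quat_eqI simp: zero_quat_def one_quat_def plus_quat_def
      minus_quat_def uminus_quat_def times_quat_def algebra_simps)
end

definition qnorm :: "quat \<Rightarrow> real" where
  "qnorm q = sqrt ((Re q)\<^sup>2 + (Im1 q)\<^sup>2 + (Im2 q)\<^sup>2 + (Im3 q)\<^sup>2)"

end

theory Submission
  imports Defs
begin

lemma qnorm_mult: "qnorm (x*y) = qnorm x * qnorm y"
  unfolding qnorm_def real_sqrt_mult[symmetric]
  by (rule arg_cong[where f=sqrt]) (simp add: times_quat_def power2_eq_square algebra_simps)
definition qv :: "quat \<Rightarrow> complex \<times> complex" where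
  "qv x = (Complex (Re x) (Im1 x), Complex (Im2 x) (Im3 x))"
lemma qnorm_qv: "qnorm x = norm (qv x)"
  by (simp add: qv_def qnorm_def norm_Pair complex_norm add.assoc)
lemma qv_add: "qv (x+y) = qv x + qv y"
  by (simp add: qv_def plus_quat_def complex_eq_iff)
lemma qnorm_tri: "qnorm (x+y) \<le> qnorm x + qnorm y"
  unfolding qnorm_qv qv_add by (rule norm_triangle_ineq)
lemma qnorm_0: "qnorm 0 = 0" by (simp add: qnorm_def zero_quat_def)
lemma qnorm_1: "qnorm 1 = 1" by (simp add: qnorm_def one_quat_def)
lemma qnorm_eq0: "qnorm x = 0 \<longleftrightarrow> x = 0"
  by (cases x) (simp add: qnorm_qv qv_def zero_quat_def complex_eq_iff zero_prod_def)
lemma qnorm_uminus: "qnorm (-x) = qnorm x" by (simp add: qnorm_def uminus_quat_def)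
lemma qnorm_power: "qnorm (x^j) = qnorm x ^ j"
  by (induction j) (simp_all add: qnorm_1 qnorm_mult)
lemma qnorm_sum: "qnorm (sum f S) \<le> (\<Sum>j\<in>S. qnorm (f j))"
proof (induction S rule: infinite_finite_induct)
  case (insert x F) then show ?case using qnorm_tri[of "f x" "sum f F"] by simp
qed (simp_all add: qnorm_0)

lemma real_bound:
  fixes k :: nat and M r :: real
  assumes M: "M > 0" and r: "r \<ge> 0" and ineq: "r^(k+3) \<le> M * (\<Sum>j\<le>k+1. r^j)"
  shows "r \<le> M powr (1 / real (k+3)) + max ((M powr (1 / real (k+3)))\<^sup>2) ((M powr (1 / real (k+3))) ^ (k+2))"
proof (rule ccontr)
  define L where "L = M powr (1 / real (k+3))"
  have L0: "L > 0" using M by (simp add: L_def)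
  have LM: "L^(k+3) = M"
  proof -
    have "L^(k+3) = L powr real (k+3)" using L0 by (simp only: powr_realpow)
    also have "\<dots> = M" using M by (simp add: L_def powr_powr)
    finally show ?thesis .
  qed
  define c where "c = max L (L^(k+1))"
  have c0: "c > 0" using L0 by (simp add: c_def)
  have mu: "max (L\<^sup>2) (L^(k+2)) = L * c"
    using L0 by (simp add: c_def power2_eq_square max_def mult_le_cancel_left_pos)
  assume "\<not> ?thesis"
  hence rgt: "r > L + L * c" using mu by (simp add: L_def)
  define t where "t = r / L"
  have rt: "r = L * t" using L0 by (simp add: t_def)
  have t1: "t > 1 + c" using rgt L0 unfolding rt
    by (metis distrib_left mult.right_neutral mult_less_cancel_left_pos)
  have tg: "t > 1" using t1 c0 by simp
  have "L^(k+3) * t^(k+3) \<le> L^(k+3) * (\<Sum>j\<le>k+1. L^j * t^j)"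
  proof -
    have e1: "r^(k+3) = L^(k+3) * t^(k+3)" by (simp only: rt power_mult_distrib)
    have e2: "M * (\<Sum>j\<le>k+1. r^j) = L^(k+3) * (\<Sum>j\<le>k+1. L^j * t^j)"
      by (simp only: rt power_mult_distrib LM)
    show ?thesis using ineq unfolding e1 e2 .
  qed
  hence A: "t^(k+3) \<le> (\<Sum>j\<le>k+1. L^j * t^j)" using L0 by simp
  have "(\<Sum>j\<le>k+1. L^j * t^j) = 1 + (\<Sum>j\<le>k. L^(Suc j) * t^(Suc j))"
    by (simp only: Suc_eq_plus1[symmetric] sum.atMost_Suc_shift) simp
  also have "\<dots> \<le> 1 + (\<Sum>j\<le>k. c * t^(Suc j))"
  proof -
    have "L^(Suc j) \<le> c" if "j \<le> k" for j
    proof (cases "L \<le> 1")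
      case True
      have "L^(Suc j) = L * L^j" by simp
      also have "\<dots> \<le> L * 1" using True L0 by (intro mult_left_mono power_le_one) auto
      finally show ?thesis by (simp add: c_def)
    next
      case False
      have "L^(Suc j) \<le> L^(k+1)" using False that by (intro power_increasing) auto
      thus ?thesis by (simp add: c_def)
    qed
    hence "L^(Suc j) * t^(Suc j) \<le> c * t^(Suc j)" if "j \<le> k" for j
      using that tg by (intro mult_right_mono) auto
    thus ?thesis by (intro add_left_mono sum_mono) auto
  qed
  also have "\<dots> \<le> 1 + (\<Sum>j\<le>k. (t - 1) * t^(Suc j))"
    using t1 tg by (intro add_left_mono sum_mono mult_right_mono) auto
  also have "(\<Sum>j\<le>k. (t - 1) * t^(Suc j)) = t * ((t - 1) * (\<Sum>j<k+1. t^j))"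
    by (simp add: sum_distrib_left lessThan_Suc_atMost algebra_simps)
  also have "\<dots> = t * (t^(k+1) - 1)" by (simp only: power_diff_1_eq[symmetric])
  finally have "t^(k+3) \<le> 1 + t * (t^(k+1) - 1)" using A by simp
  moreover have "(t - 1) * (t^(k+2) + 1) > 0" using tg by (simp add: add_pos_pos)
  ultimately show False by (simp add: algebra_simps eval_nat_numeral)
qed

theorem corollary3:
  fixes n :: nat and a :: "nat \<Rightarrow> quat" and q :: quat
  assumes "n \<ge> 3"
    and "a (n - 2) \<noteq> 0"
    and "q ^ n + (\<Sum>j\<le>n - 2. q ^ j * a j) = 0"
  shows "qnorm q \<le> (MAX j\<in>{0..n - 2}. qnorm (a j)) powr (1 / real n)
           + max (((MAX j\<in>{0..n - 2}. qnorm (a j)) powr (1 / real n))\<^sup>2)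
                 (((MAX j\<in>{0..n - 2}. qnorm (a j)) powr (1 / real n)) ^ (n - 1))"
proof -
  obtain k where n: "n = k + 3" using assms(1) by (metis add.commute le_iff_add)
  define M where "M = (MAX j\<in>{0..n - 2}. qnorm (a j))"
  have Mge: "qnorm (a j) \<le> M" if "j \<le> n - 2" for j
    unfolding M_def using that by (intro Max_ge) auto
  have "qnorm (a (n-2)) \<ge> 0" by (simp add: qnorm_def)
  hence "qnorm (a (n-2)) > 0" using assms(2) qnorm_eq0[of "a (n-2)"] by linarith
  hence M0: "M > 0" using Mge[of "n-2"] by simp
  have "q^n = - (\<Sum>j\<le>n - 2. q ^ j * a j)" using assms(3) by (simp add: eq_neg_iff_add_eq_0)
  hence "qnorm q ^ n = qnorm (\<Sum>j\<le>n - 2. q ^ j * a j)" by (metis qnorm_power qnorm_uminus)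
  also have "\<dots> \<le> (\<Sum>j\<le>n - 2. qnorm q ^ j * qnorm (a j))"
    by (rule order_trans[OF qnorm_sum]) (simp add: qnorm_mult qnorm_power)
  also have "\<dots> \<le> (\<Sum>j\<le>n - 2. qnorm q ^ j * M)"
    using Mge by (intro sum_mono mult_left_mono) (auto simp: qnorm_def)
  finally have key: "qnorm q ^ (k+3) \<le> M * (\<Sum>j\<le>k+1. qnorm q ^ j)"
    by (simp add: n sum_distrib_left mult.commute numeral_3_eq_3 del: sum.atMost_Suc)
  have "qnorm q \<le> M powr (1 / real (k+3)) + max ((M powr (1 / real (k+3)))\<^sup>2) ((M powr (1 / real (k+3))) ^ (k+2))"
    by (rule real_bound[OF M0 _ key]) (simp add: qnorm_def)
  moreover have "k + 3 - 1 = k + 2" by simp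
  moreover have Mk: "(MAX j\<in>{0..k+3-2}. qnorm (a j)) = M" unfolding M_def n ..
  ultimately show ?thesis unfolding n Mk by (simp only:)
qed

end
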